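(* Let $k$, $c$ and $n$ be positive integers and let $F=(V,E)$ be a $(2,3)$-graph on at least $5^{k-1}cn$ vertices. If $F$ contains no $(2,3)$-path with $n$ vertices, then there exist pairwise disjoint sets $V_1,\dots,V_k\subseteq V$, each of size at least $cn$, such that no edge of $E$ is a transversal with respect to $V_1,\dots,V_k$, and there is no $3$-edge $uv(w)\in E$ with $u\in V_1\cup\dots\cup V_{k-1}$ and $v,w\in V_k$.
   Context: A $(2,3)$-graph $F=(V,E)$ consists of a vertex set $V$ and a set $E$ of $2$-edges, which are unordered pairs $uv=\{u,v\}$ of distinct vertices, and $3$-edges, written $uv(w)=(\{u,v\},w)$, consisting of an unordered pair $\{u,v\}$ together with a third vertex $w$, where $u,v,w$ are distinct. A sequence of distinct vertices $(x_1,\dots,x_m)$ is a $(2,3)$-path with $m$ vertices in $F$ if for every $i=1,\dots,m-1$ either $x_ix_{i+1}\in E$ or $x_ix_{i+1}(w_i)\in E$ for some $w_i\in V\setminus\{x_1,\dots,x_m\}$, where all these vertices $w_i$ are distinct. Given pairwise disjoint sets $V_1,\dots,V_k$, a $2$-edge $uv$ is a transversal (with respect to $V_1,\dots,V_k$) if $u$ and $v$ lie in two different sets $V_i$, and a $3$-edge $uv(w)$ is a transversal if $u$, $v$ and $w$ lie in three pairwise different sets $V_i$. *)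

theory Defs
  imports Main
begin

text \<open>A (2,3)-graph on vertex set V: E2 is a set of 2-edges (unordered pairs of distinct
vertices), E3 a set of 3-edges uv(w), represented as pairs ({u,v}, w) with u,v,w distinct.\<close>

definition graph23 :: "'a set \<Rightarrow> 'a set set \<Rightarrow> ('a set \<times> 'a) set \<Rightarrow> bool" where
  "graph23 V E2 E3 \<longleftrightarrow>
     (\<forall>e\<in>E2. \<exists>u v. e = {u, v} \<and> u \<noteq> v \<and> u \<in> V \<and> v \<in> V) \<and>
     (\<forall>(e, w)\<in>E3. \<exists>u v. e = {u, v} \<and> u \<noteq> v \<and> u \<noteq> w \<and> v \<noteq> w \<and> u \<in> V \<and> v \<in> V \<and> w \<in> V)"

definition path23 :: "'a set \<Rightarrow> 'a set set \<Rightarrow> ('a set \<times> 'a) set \<Rightarrow> 'a list \<Rightarrow> bool" where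
  "path23 V E2 E3 xs \<longleftrightarrow> distinct xs \<and> set xs \<subseteq> V \<and>
     (\<exists>I w. I \<subseteq> {..<length xs - 1} \<and> inj_on w I \<and>
        (\<forall>i\<in>I. w i \<in> V - set xs \<and> ({xs ! i, xs ! Suc i}, w i) \<in> E3) \<and>
        (\<forall>i < length xs - 1. i \<notin> I \<longrightarrow> {xs ! i, xs ! Suc i} \<in> E2))"

definition transversal2 :: "nat \<Rightarrow> (nat \<Rightarrow> 'a set) \<Rightarrow> 'a \<Rightarrow> 'a \<Rightarrow> bool" where
  "transversal2 k Vs u v \<longleftrightarrow>
     (\<exists>i\<in>{1..k}. \<exists>j\<in>{1..k}. i \<noteq> j \<and> u \<in> Vs i \<and> v \<in> Vs j)"

definition transversal3 :: "nat \<Rightarrow> (nat \<Rightarrow> 'a set) \<Rightarrow> 'a \<Rightarrow> 'a \<Rightarrow> 'a \<Rightarrow> bool" where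
  "transversal3 k Vs u v w \<longleftrightarrow>
     (\<exists>i\<in>{1..k}. \<exists>j\<in>{1..k}. \<exists>l\<in>{1..k}. i \<noteq> j \<and> i \<noteq> l \<and> j \<noteq> l \<and>
        u \<in> Vs i \<and> v \<in> Vs j \<and> w \<in> Vs l)"

end

theory Submission
  imports Defs
begin


definition pathw :: "'a set \<Rightarrow> 'a set set \<Rightarrow> ('a set \<times> 'a) set \<Rightarrow> 'a list \<Rightarrow> nat set \<Rightarrow> (nat \<Rightarrow> 'a) \<Rightarrow> bool" where
"pathw V E2 E3 xs I w \<longleftrightarrow> distinct xs \<and> set xs \<subseteq> V \<and> I \<subseteq> {..<length xs - 1} \<and> inj_on w I \<and>
   (\<forall>i\<in>I. w i \<in> V - set xs \<and> ({xs ! i, xs ! Suc i}, w i) \<in> E3) \<and>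
   (\<forall>i < length xs - 1. i \<notin> I \<longrightarrow> {xs ! i, xs ! Suc i} \<in> E2)"

lemma path23_iff: "path23 V E2 E3 xs \<longleftrightarrow> (\<exists>I w. pathw V E2 E3 xs I w)"
  by (simp add: path23_def pathw_def)

lemma pathw_single: "y \<in> V \<Longrightarrow> pathw V E2 E3 [y] {} w"
  by (simp add: pathw_def)

lemma pathw_snoc2:
  assumes p: "pathw V E2 E3 xs I w" and ne: "xs \<noteq> []" and y: "y \<in> V" "y \<notin> set xs" "y \<notin> w ` I"
    and e: "{last xs, y} \<in> E2"
  shows "pathw V E2 E3 (xs @ [y]) I w"
proof -
  from p have d: "distinct xs" "set xs \<subseteq> V" "I \<subseteq> {..<length xs - 1}" "inj_on w I"
    "\<forall>i\<in>I. w i \<in> V - set xs \<and> ({xs ! i, xs ! Suc i}, w i) \<in> E3"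
    "\<forall>i < length xs - 1. i \<notin> I \<longrightarrow> {xs ! i, xs ! Suc i} \<in> E2" by (auto simp: pathw_def)
  have A: "\<forall>i\<in>I. w i \<in> V - set (xs @ [y]) \<and> ({(xs @ [y]) ! i, (xs @ [y]) ! Suc i}, w i) \<in> E3"
  proof
    fix i assume i: "i \<in> I"
    then have "i < length xs - 1" using d(3) by auto
    then show "w i \<in> V - set (xs @ [y]) \<and> ({(xs @ [y]) ! i, (xs @ [y]) ! Suc i}, w i) \<in> E3"
      using d(5) i y(3) by (auto simp: nth_append)
  qed
  have B: "\<forall>i < length (xs @ [y]) - 1. i \<notin> I \<longrightarrow> {(xs @ [y]) ! i, (xs @ [y]) ! Suc i} \<in> E2"
  proof (intro allI impI)
    fix i assume i: "i < length (xs @ [y]) - 1" "i \<notin> I"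
    show "{(xs @ [y]) ! i, (xs @ [y]) ! Suc i} \<in> E2"
    proof (cases "i < length xs - 1")
      case True then show ?thesis using d(6) i by (auto simp: nth_append)
    next
      case False
      then have "i = length xs - 1" using i ne by auto
      then show ?thesis using e ne by (auto simp: nth_append last_conv_nth)
    qed
  qed
  show ?thesis unfolding pathw_def using d A B y by auto
qed

lemma pathw_snoc3:
  assumes p: "pathw V E2 E3 xs I w" and ne: "xs \<noteq> []" and y: "y \<in> V" "y \<notin> set xs" "y \<notin> w ` I"
    and z: "z \<in> V" "z \<notin> set xs" "z \<noteq> y" "z \<notin> w ` I"
    and e: "({last xs, y}, z) \<in> E3"
  shows "pathw V E2 E3 (xs @ [y]) (insert (length xs - 1) I) (w(length xs - 1 := z))"
proof -
  from p have d: "distinct xs" "set xs \<subseteq> V" "I \<subseteq> {..<length xs - 1}" "inj_on w I"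
    "\<forall>i\<in>I. w i \<in> V - set xs \<and> ({xs ! i, xs ! Suc i}, w i) \<in> E3"
    "\<forall>i < length xs - 1. i \<notin> I \<longrightarrow> {xs ! i, xs ! Suc i} \<in> E2" by (auto simp: pathw_def)
  define a where "a = length xs - 1"
  have aI: "a \<notin> I" using d(3) a_def by auto
  have inj: "inj_on (w(a := z)) (insert a I)"
  proof -
    have "inj_on (w(a := z)) I" using d(4) aI by (simp add: inj_on_def)
    moreover have "(w(a := z)) a \<notin> (w(a := z)) ` (I - {a})" using z(4) aI by auto
    ultimately show ?thesis by (simp add: inj_on_insert)
  qed
  have A: "\<forall>i\<in>insert a I. (w(a := z)) i \<in> V - set (xs @ [y]) \<and> ({(xs @ [y]) ! i, (xs @ [y]) ! Suc i}, (w(a := z)) i) \<in> E3"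
  proof
    fix i assume i: "i \<in> insert a I"
    show "(w(a := z)) i \<in> V - set (xs @ [y]) \<and> ({(xs @ [y]) ! i, (xs @ [y]) ! Suc i}, (w(a := z)) i) \<in> E3"
    proof (cases "i = a")
      case True then show ?thesis using z e ne a_def by (auto simp: nth_append last_conv_nth)
    next
      case False
      then have "i \<in> I" using i by auto
      then have "i < length xs - 1" using d(3) by auto
      then show ?thesis using d(5) \<open>i \<in> I\<close> y(3) False by (auto simp: nth_append)
    qed
  qed
  have B: "\<forall>i < length (xs @ [y]) - 1. i \<notin> insert a I \<longrightarrow> {(xs @ [y]) ! i, (xs @ [y]) ! Suc i} \<in> E2"
  proof (intro allI impI)
    fix i assume i: "i < length (xs @ [y]) - 1" "i \<notin> insert a I"
    then have "i < length xs - 1" using a_def ne by auto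
    then show "{(xs @ [y]) ! i, (xs @ [y]) ! Suc i} \<in> E2" using d(6) i by (auto simp: nth_append)
  qed
  have C: "insert a I \<subseteq> {..<length (xs @ [y]) - 1}" using d(3) a_def ne by auto
  show ?thesis unfolding pathw_def a_def[symmetric] using d(1,2) A B C inj y by auto
qed

lemma last_notin_butlast: "distinct xs \<Longrightarrow> xs \<noteq> [] \<Longrightarrow> last xs \<notin> set (butlast xs)"
  by (metis append_butlast_last_id distinct_append disjoint_iff list.set_intros(1) set_simps(2) distinct.simps(2))

lemma pathw_butlast:
  assumes p: "pathw V E2 E3 xs I w"
  shows "pathw V E2 E3 (butlast xs) (I \<inter> {..<length xs - 2}) w"
proof -
  from p have d: "distinct xs" "set xs \<subseteq> V" "I \<subseteq> {..<length xs - 1}" "inj_on w I"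
    "\<forall>i\<in>I. w i \<in> V - set xs \<and> ({xs ! i, xs ! Suc i}, w i) \<in> E3"
    "\<forall>i < length xs - 1. i \<notin> I \<longrightarrow> {xs ! i, xs ! Suc i} \<in> E2" by (auto simp: pathw_def)
  have s: "set (butlast xs) \<subseteq> set xs" by (rule in_set_butlastD[THEN subsetI])
  show ?thesis unfolding pathw_def
  proof (intro conjI)
    show "distinct (butlast xs)" using d(1) by (simp add: distinct_butlast)
    show "set (butlast xs) \<subseteq> V" using s d(2) by auto
    show "I \<inter> {..<length xs - 2} \<subseteq> {..<length (butlast xs) - 1}" by auto
    show "inj_on w (I \<inter> {..<length xs - 2})" using d(4) by (rule inj_on_subset) auto
    show "\<forall>i\<in>I \<inter> {..<length xs - 2}. w i \<in> V - set (butlast xs) \<and> ({butlast xs ! i, butlast xs ! Suc i}, w i) \<in> E3"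
      using d(5) s by (auto simp: nth_butlast)
    show "\<forall>i<length (butlast xs) - 1. i \<notin> I \<inter> {..<length xs - 2} \<longrightarrow> {butlast xs ! i, butlast xs ! Suc i} \<in> E2"
      using d(6) by (auto simp: nth_butlast)
  qed
qed



lemma card_diff_diff_le: "finite A \<Longrightarrow> card (A - (B - C)) \<le> card (A - B) + card (A \<inter> C)"
proof -
  assume f: "finite A"
  have "A - (B - C) = (A - B) \<union> (A \<inter> C)" by auto
  then show ?thesis using card_Un_le by metis
qed

locale G23 =
  fixes V :: "'a set" and E2 :: "'a set set" and E3 :: "('a set \<times> 'a) set" and n :: nat
  assumes gr: "graph23 V E2 E3" and finV: "finite V"
    and nopath: "\<not> (\<exists>xs. length xs = n \<and> path23 V E2 E3 xs)"
begin

lemma e3_dist: "({a, b}, z) \<in> E3 \<Longrightarrow> z \<noteq> a \<and> z \<noteq> b"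
  using gr unfolding graph23_def by (fastforce simp: doubleton_eq_iff)

lemma len_lt: "pathw V E2 E3 xs I w \<Longrightarrow> length xs \<le> n \<Longrightarrow> length xs < n"
  using nopath path23_iff by (metis le_neq_implies_less)

definition sep where
  "sep S T Z \<longleftrightarrow> (\<forall>u v. {u,v} \<in> E2 \<longrightarrow> u \<in> S \<longrightarrow> v \<notin> T) \<and>
     (\<forall>u v z. ({u,v},z) \<in> E3 \<longrightarrow> u \<in> S \<longrightarrow> v \<in> T \<longrightarrow> z \<notin> T \<and> z \<notin> Z)"

lemma sep_mono: "sep S T Z \<Longrightarrow> T' \<subseteq> T \<Longrightarrow> Z' \<subseteq> Z \<Longrightarrow> sep S T' Z'"
  unfolding sep_def by blast

definition dinv where
  "dinv T0 Z0 S xs I w T Z \<longleftrightarrow> S \<subseteq> T0 \<and> T \<subseteq> T0 \<and> set xs \<subseteq> T0 \<and> S \<inter> T = {} \<and> S \<inter> set xs = {} \<and>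
     T \<inter> set xs = {} \<and> Z \<subseteq> Z0 \<and> pathw V E2 E3 xs I w \<and> w ` I \<inter> (T \<union> Z) = {} \<and> length xs < n \<and>
     card (T0 - T) + card (Z0 - Z) \<le> 2 * (card S + length xs) \<and> sep S T Z"

context
  fixes T0 Z0
  assumes T0V: "T0 \<subseteq> V" and Z0V: "Z0 \<subseteq> V" and TZ: "T0 \<inter> Z0 = {}"
begin

lemma finT0: "finite T0" using T0V finV finite_subset by auto
lemma finZ0: "finite Z0" using Z0V finV finite_subset by auto

lemma dinvD:
  assumes "dinv T0 Z0 S xs I w T Z"
  shows "S \<subseteq> T0" "T \<subseteq> T0" "set xs \<subseteq> T0" "S \<inter> T = {}" "S \<inter> set xs = {}"
     "T \<inter> set xs = {}" "Z \<subseteq> Z0" "pathw V E2 E3 xs I w" "w ` I \<inter> (T \<union> Z) = {}" "length xs < n"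
     "card (T0 - T) + card (Z0 - Z) \<le> 2 * (card S + length xs)" "sep S T Z"
  using assms unfolding dinv_def by auto

lemma st_start:
  assumes i: "dinv T0 Z0 S [] I w T Z" and y: "y \<in> T"
  shows "dinv T0 Z0 S [y] {} w (T - {y}) Z"
proof -
  note d = dinvD[OF i]
  have yV: "y \<in> V" using d(2) y T0V by auto
  have p: "pathw V E2 E3 [y] {} w" using yV by (rule pathw_single)
  have l: "length [y] < n" using len_lt[OF p] d(10) by simp
  have c: "card (T0 - (T - {y})) \<le> card (T0 - T) + card (T0 \<inter> {y})" by (rule card_diff_diff_le[OF finT0])
  have c1: "card (T0 \<inter> {y}) \<le> 1" by (simp add: card_le_Suc0_iff_eq)
  show ?thesis unfolding dinv_def
  proof (intro conjI)
    show "card (T0 - (T - {y})) + card (Z0 - Z) \<le> 2 * (card S + length [y])" using c c1 d(11) by simp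
    show "sep S (T - {y}) Z" using d(12) by (rule sep_mono) auto
  qed (use d y p l in auto)
qed

lemma st_ext2:
  assumes i: "dinv T0 Z0 S xs I w T Z" and ne: "xs \<noteq> []" and y: "y \<in> T" and e: "{last xs, y} \<in> E2"
  shows "dinv T0 Z0 S (xs @ [y]) I w (T - {y}) Z"
proof -
  note d = dinvD[OF i]
  have yV: "y \<in> V" using d(2) y T0V by auto
  have p: "pathw V E2 E3 (xs @ [y]) I w"
    by (rule pathw_snoc2[OF d(8) ne yV]) (use d(6,9) y e in auto)
  have l: "length (xs @ [y]) < n" using len_lt[OF p] d(10) by simp
  have c: "card (T0 - (T - {y})) \<le> card (T0 - T) + card (T0 \<inter> {y})" by (rule card_diff_diff_le[OF finT0])
  have c1: "card (T0 \<inter> {y}) \<le> 1" by (simp add: card_le_Suc0_iff_eq)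
  show ?thesis unfolding dinv_def
  proof (intro conjI)
    show "card (T0 - (T - {y})) + card (Z0 - Z) \<le> 2 * (card S + length (xs @ [y]))" using c c1 d(11) by simp
    show "sep S (T - {y}) Z" using d(12) by (rule sep_mono) auto
    show "w ` I \<inter> (T - {y} \<union> Z) = {}" using d(9) by auto
  qed (use d y p l in auto)
qed

lemma st_ext3:
  assumes i: "dinv T0 Z0 S xs I w T Z" and ne: "xs \<noteq> []" and y: "y \<in> T" and z: "z \<in> T \<union> Z"
    and e: "({last xs, y}, z) \<in> E3"
  shows "dinv T0 Z0 S (xs @ [y]) (insert (length xs - 1) I) (w(length xs - 1 := z)) (T - {y, z}) (Z - {z})"
proof -
  note d = dinvD[OF i]
  have yV: "y \<in> V" using d(2) y T0V by auto
  have zV: "z \<in> V" using d(2,7) z T0V Z0V by auto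
  have zy: "z \<noteq> y" using e3_dist[OF e] by auto
  have zxs: "z \<notin> set xs" using d(3,6,7) z TZ by auto
  have p: "pathw V E2 E3 (xs @ [y]) (insert (length xs - 1) I) (w(length xs - 1 := z))"
    by (rule pathw_snoc3[OF d(8) ne yV _ _ zV zxs zy _ e]) (use d(6,9) y z in auto)
  have l: "length (xs @ [y]) < n" using len_lt[OF p] d(10) by simp
  have aI: "length xs - 1 \<notin> I" using d(8) unfolding pathw_def by auto
  have img: "(w(length xs - 1 := z)) ` (insert (length xs - 1) I) \<subseteq> insert z (w ` I)" using aI by auto
  have c1: "card (T0 - (T - {y, z})) \<le> card (T0 - T) + card (T0 \<inter> {y, z})" by (rule card_diff_diff_le[OF finT0])
  have c2: "card (Z0 - (Z - {z})) \<le> card (Z0 - Z) + card (Z0 \<inter> {z})" by (rule card_diff_diff_le[OF finZ0])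
  have c3: "card (T0 \<inter> {y, z}) + card (Z0 \<inter> {z}) \<le> 2"
  proof (cases "z \<in> T0")
    case True
    then have "Z0 \<inter> {z} = {}" using TZ by auto
    moreover have "card (T0 \<inter> {y, z}) \<le> 2"
    proof -
      have "card (T0 \<inter> {y, z}) \<le> card {y, z}" by (rule card_mono) auto
      also have "\<dots> \<le> 2" by (simp add: card_insert_if)
      finally show ?thesis .
    qed
    ultimately show ?thesis by simp
  next
    case False
    then have "T0 \<inter> {y, z} \<subseteq> {y}" by auto
    then have "card (T0 \<inter> {y, z}) \<le> card {y}" by (intro card_mono) auto
    then have "card (T0 \<inter> {y, z}) \<le> 1" by simp
    moreover have "card (Z0 \<inter> {z}) \<le> 1" by (simp add: card_le_Suc0_iff_eq)
    ultimately show ?thesis by simp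
  qed
  show ?thesis unfolding dinv_def
  proof (intro conjI)
    show "card (T0 - (T - {y, z})) + card (Z0 - (Z - {z})) \<le> 2 * (card S + length (xs @ [y]))"
      using c1 c2 c3 d(11) by simp
    show "sep S (T - {y, z}) (Z - {z})" using d(12) by (rule sep_mono) auto
    show "w(length xs - 1 := z) ` insert (length xs - 1) I \<inter> (T - {y, z} \<union> (Z - {z})) = {}"
      using img d(9) by blast
  qed (use d y p l in auto)
qed

lemma st_pop:
  assumes i: "dinv T0 Z0 S xs I w T Z" and ne: "xs \<noteq> []"
    and n2: "\<forall>y\<in>T. {last xs, y} \<notin> E2" and n3: "\<forall>y\<in>T. \<forall>z\<in>T \<union> Z. ({last xs, y}, z) \<notin> E3"
  shows "dinv T0 Z0 (insert (last xs) S) (butlast xs) (I \<inter> {..<length xs - 2}) w T Z"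
proof -
  note d = dinvD[OF i]
  have lx: "last xs \<in> set xs" using ne by simp
  have p: "pathw V E2 E3 (butlast xs) (I \<inter> {..<length xs - 2}) w"
    using d(8) by (rule pathw_butlast)
  have dist: "distinct xs" using d(8) unfolding pathw_def by auto
  have lnb: "last xs \<notin> set (butlast xs)" using last_notin_butlast[OF dist ne] .
  have sb: "set (butlast xs) \<subseteq> set xs" by (rule in_set_butlastD[THEN subsetI])
  have lS: "last xs \<notin> S" using d(5) lx by auto
  have finS: "finite S" using d(1) finT0 by (auto intro: finite_subset)
  have cS: "card (insert (last xs) S) = Suc (card S)" using lS finS by simp
  have ll: "length (butlast xs) = length xs - 1" by simp
  have len1: "length xs \<ge> 1" using ne by (cases xs) auto
  have sp: "sep (insert (last xs) S) T Z"
    unfolding sep_def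
  proof (intro conjI allI impI)
    fix u v assume "{u, v} \<in> E2" "u \<in> insert (last xs) S"
    then show "v \<notin> T" using d(12) n2 unfolding sep_def by auto
  next
    fix u v z assume "({u, v}, z) \<in> E3" "u \<in> insert (last xs) S" "v \<in> T"
    then show "z \<notin> T" "z \<notin> Z" using d(12) n3 unfolding sep_def by auto
  qed
  show ?thesis unfolding dinv_def
  proof (intro conjI)
    show "card (T0 - T) + card (Z0 - Z) \<le> 2 * (card (insert (last xs) S) + length (butlast xs))"
      using d(11) cS ll len1 by simp
    show "w ` (I \<inter> {..<length xs - 2}) \<inter> (T \<union> Z) = {}" using d(9) by auto
    show "length (butlast xs) < n" using d(10) by simp
  qed (use d p lx lnb sb sp in auto)
qed

end
end


context G23 begin

lemma dfs:
  assumes T0V: "T0 \<subseteq> V" and Z0V: "Z0 \<subseteq> V" and TZ: "T0 \<inter> Z0 = {}" and big: "2 * s \<le> card T0"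
  shows "\<exists>S T Z. S \<subseteq> T0 \<and> T \<subseteq> T0 \<and> S \<inter> T = {} \<and> Z \<subseteq> Z0 \<and> card S = s \<and>
     card (T0 - T) + card (Z0 - Z) \<le> 2 * s + 2 * n \<and> sep S T Z"
    (is "\<exists>S T Z. ?Q S T Z")
proof -
  note fT = finT0[OF T0V Z0V TZ]
  have main: "\<forall>S xs I w T Z. (s - card S) + 2 * card T + length xs = \<mu> \<longrightarrow>
      dinv T0 Z0 S xs I w T Z \<longrightarrow> card S \<le> s \<longrightarrow> (\<exists>S T Z. ?Q S T Z)" for \<mu>
  proof (induction \<mu> rule: less_induct)
    case (less \<mu>)
    show ?case
    proof (intro allI impI)
      fix S xs I w T Z
      assume mu: "(s - card S) + 2 * card T + length xs = \<mu>" and i: "dinv T0 Z0 S xs I w T Z"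
        and cs: "card S \<le> s"
      note d = dinvD[OF T0V Z0V TZ i]
      have finT: "finite T" using d(2) fT by (rule finite_subset)
      show "\<exists>S T Z. ?Q S T Z"
      proof (cases "card S = s")
        case True
        have "card (T0 - T) + card (Z0 - Z) \<le> 2 * s + 2 * n" using d(10,11) True by simp
        then show ?thesis using d(1,2,4,7,12) True by blast
      next
        case False
        then have lt: "card S < s" using cs by simp
        show ?thesis
        proof (cases "xs = []")
          case True
          have "T \<noteq> {}"
          proof
            assume "T = {}"
            then have "card T0 \<le> 2 * card S" using d(11) True by simp
            then show False using lt big by simp
          qed
          then obtain y where y: "y \<in> T" by blast
          have i2: "dinv T0 Z0 S [y] {} w (T - {y}) Z"
            using st_start[OF T0V Z0V TZ, of S I w T Z y] i True y by simp
          have "card (T - {y}) = card T - 1" using y finT by simp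
          moreover have "card T \<ge> 1" using y finT by (metis One_nat_def Suc_leI card_gt_0_iff empty_iff)
          ultimately have lt2: "(s - card S) + 2 * card (T - {y}) + length [y] < \<mu>" using mu True by simp
          show ?thesis by (rule less.IH[rule_format, OF lt2 refl i2 cs])
        next
          case ne: False
          show ?thesis
          proof (cases "\<exists>y\<in>T. {last xs, y} \<in> E2")
            case True
            then obtain y where y: "y \<in> T" "{last xs, y} \<in> E2" by blast
            have i2: "dinv T0 Z0 S (xs @ [y]) I w (T - {y}) Z"
              using st_ext2[OF T0V Z0V TZ i ne y] .
            have "card (T - {y}) = card T - 1" using y finT by simp
            moreover have "card T \<ge> 1" using y finT by (metis One_nat_def Suc_leI card_gt_0_iff empty_iff)
            ultimately have lt2: "(s - card S) + 2 * card (T - {y}) + length (xs @ [y]) < \<mu>" using mu by simp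
            show ?thesis by (rule less.IH[rule_format, OF lt2 refl i2 cs])
          next
            case n2: False
            show ?thesis
            proof (cases "\<exists>y\<in>T. \<exists>z\<in>T \<union> Z. ({last xs, y}, z) \<in> E3")
              case True
              then obtain y z where y: "y \<in> T" "z \<in> T \<union> Z" "({last xs, y}, z) \<in> E3" by blast
              have i2: "dinv T0 Z0 S (xs @ [y]) (insert (length xs - 1) I) (w(length xs - 1 := z)) (T - {y, z}) (Z - {z})"
                using st_ext3[OF T0V Z0V TZ i ne y] .
              have "card (T - {y, z}) \<le> card (T - {y})" using finT by (intro card_mono) auto
              moreover have "card (T - {y}) = card T - 1" using y finT by simp
              moreover have "card T \<ge> 1" using y finT by (metis One_nat_def Suc_leI card_gt_0_iff empty_iff)
              ultimately have lt2: "(s - card S) + 2 * card (T - {y, z}) + length (xs @ [y]) < \<mu>" using mu by simp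
              show ?thesis by (rule less.IH[rule_format, OF lt2 refl i2 cs])
            next
              case n3: False
              have i2: "dinv T0 Z0 (insert (last xs) S) (butlast xs) (I \<inter> {..<length xs - 2}) w T Z"
                using st_pop[OF T0V Z0V TZ i ne] n2 n3 by blast
              have lx: "last xs \<notin> S" using d(5) ne by auto
              have finS: "finite S" using d(1) fT by (rule finite_subset)
              have cS: "card (insert (last xs) S) = Suc (card S)" using lx finS by simp
              have lt2: "(s - card (insert (last xs) S)) + 2 * card T + length (butlast xs) < \<mu>"
                using mu cS lt ne by (cases xs) auto
              have cs2: "card (insert (last xs) S) \<le> s" using cS lt by simp
              show ?thesis by (rule less.IH[rule_format, OF lt2 refl i2 cs2])
            qed
          qed
        qed
      qed
    qed
  qed
  have i0: "dinv T0 Z0 {} [] {} w T0 Z0" for w :: "nat \<Rightarrow> 'a"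
  proof -
    have "pathw V E2 E3 [] {} w" by (simp add: pathw_def)
    then have "n \<noteq> 0" using nopath path23_iff by fastforce
    then show ?thesis unfolding dinv_def sep_def pathw_def by auto
  qed
  have "card {} \<le> s" by simp
  show ?thesis by (rule main[rule_format, OF refl i0 \<open>card {} \<le> s\<close>])
qed

end


context G23 begin

definition good where
  "good K Vs Z' \<longleftrightarrow> (\<forall>i\<in>{1..K}. \<forall>j\<in>{1..K}. i \<noteq> j \<longrightarrow> (\<forall>u v. {u,v} \<in> E2 \<longrightarrow> u \<in> Vs i \<longrightarrow> v \<notin> Vs j)) \<and>
    (\<forall>i\<in>{1..K}. \<forall>j\<in>{1..K}. i \<noteq> j \<longrightarrow> (\<forall>u v z. ({u,v},z) \<in> E3 \<longrightarrow> u \<in> Vs i \<longrightarrow> v \<in> Vs j \<longrightarrow>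
       z \<notin> Z' \<and> (\<forall>l\<in>{1..K}. l \<noteq> min i j \<longrightarrow> z \<notin> Vs l)))"

lemma GL:
  assumes nm: "n \<le> m"
  shows "U \<subseteq> V \<Longrightarrow> Z \<subseteq> V \<Longrightarrow> U \<inter> Z = {} \<Longrightarrow> 5^j * m \<le> card U \<Longrightarrow>
    \<exists>Vs Z'. (\<forall>i\<in>{1..Suc j}. Vs i \<subseteq> U \<and> m \<le> card (Vs i)) \<and>
      (\<forall>i\<in>{1..Suc j}. \<forall>l\<in>{1..Suc j}. i \<noteq> l \<longrightarrow> Vs i \<inter> Vs l = {}) \<and>
      Z' \<subseteq> Z \<and> card (Z - Z') + 2 * m \<le> 2 * 3^j * m \<and> good (Suc j) Vs Z'"
proof (induction j arbitrary: U Z)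
  case 0
  show ?case
  proof (intro exI conjI)
    show "\<forall>i\<in>{1..Suc 0}. (\<lambda>_. U) i \<subseteq> U \<and> m \<le> card ((\<lambda>_. U) i)" using 0 by simp
    show "good (Suc 0) (\<lambda>_. U) Z" unfolding good_def by auto
  qed auto
next
  case (Suc j)
  define a where "a = 3^j * m"
  define b where "b = 5^j * m"
  have ab: "a \<le> b" unfolding a_def b_def by (intro mult_right_mono power_mono) auto
  have am: "m \<le> a" unfolding a_def by simp
  define s where "s = 2 * a - m"
  have sm: "s + m = 2 * a" using am s_def by simp
  have cU: "5 * b \<le> card U" using Suc.prems(4) unfolding b_def by simp
  have big: "2 * s \<le> card U" using cU ab sm by linarith
  obtain S T Z1 where D: "S \<subseteq> U" "T \<subseteq> U" "S \<inter> T = {}" "Z1 \<subseteq> Z" "card S = s"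
     "card (U - T) + card (Z - Z1) \<le> 2 * s + 2 * n" "sep S T Z1"
    using dfs[OF Suc.prems(1,2,3) big] by blast
  have finU: "finite U" using Suc.prems(1) finV by (rule finite_subset)
  have finZ: "finite Z" using Suc.prems(2) finV by (rule finite_subset)
  have finT: "finite T" using D(2) finU by (rule finite_subset)
  have cT0: "card (U - T) = card U - card T" using card_Diff_subset[OF finT D(2)] .
  have cT1: "card T \<le> card U" using card_mono[OF finU D(2)] .
  have cT: "card T = card U - card (U - T)" using cT0 cT1 by simp
  have cT2: "b \<le> card T" using cT D(6) nm cU ab sm by linarith
  have IHp: "T \<subseteq> V" "Z1 \<union> S \<subseteq> V" "T \<inter> (Z1 \<union> S) = {}" "5^j * m \<le> card T"
    using D Suc.prems cT2 b_def by auto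
  obtain Vs' Z2 where R: "\<forall>i\<in>{1..Suc j}. Vs' i \<subseteq> T \<and> m \<le> card (Vs' i)"
      "\<forall>i\<in>{1..Suc j}. \<forall>l\<in>{1..Suc j}. i \<noteq> l \<longrightarrow> Vs' i \<inter> Vs' l = {}"
      "Z2 \<subseteq> Z1 \<union> S" "card ((Z1 \<union> S) - Z2) + 2 * m \<le> 2 * 3^j * m" "good (Suc j) Vs' Z2"
    using Suc.IH[OF IHp] by blast
  have finZS: "finite (Z1 \<union> S)" using IHp(2) finV by (rule finite_subset)
  have finS: "finite S" using D(1) finU by (rule finite_subset)
  have c1: "card (S - Z2) \<le> card ((Z1 \<union> S) - Z2)" using finZS by (intro card_mono) auto
  have c2: "card (S - Z2) = card S - card (S \<inter> Z2)" using finS by (simp add: card_Diff_subset_Int)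
  have c3: "card (S \<inter> Z2) \<le> card S" using finS by (intro card_mono) auto
  have cSZ: "m \<le> card (S \<inter> Z2)" using c1 c2 c3 R(4) D(5) sm a_def by linarith
  define Z' where "Z' = Z1 \<inter> Z2"
  have zz: "Z - Z' \<subseteq> (Z - Z1) \<union> ((Z1 \<union> S) - Z2)" unfolding Z'_def by auto
  have c4: "card (Z - Z') \<le> card (Z - Z1) + card ((Z1 \<union> S) - Z2)"
  proof -
    have "card (Z - Z') \<le> card ((Z - Z1) \<union> ((Z1 \<union> S) - Z2))" using zz finZ finZS by (intro card_mono) auto
    also have "\<dots> \<le> card (Z - Z1) + card ((Z1 \<union> S) - Z2)" by (rule card_Un_le)
    finally show ?thesis .
  qed
  have cZ: "card (Z - Z') + 2 * m \<le> 2 * 3 ^ Suc j * m"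
  proof -
    have "2 * 3 ^ Suc j * m = 6 * a" unfolding a_def by simp
    then show ?thesis using c4 D(6) R(4) nm sm a_def by linarith
  qed
  define W where "W i = (if i = (1::nat) then S \<inter> Z2 else Vs' (i - 1))" for i
  have W1: "W 1 \<subseteq> S" "W 1 \<subseteq> Z2" unfolding W_def by auto
  have WT: "W i \<subseteq> T" if "i \<in> {1..Suc (Suc j)}" "i \<noteq> 1" for i
    using R(1) that unfolding W_def by (cases i) auto
  have Wi: "i - 1 \<in> {1..Suc j}" if "i \<in> {1..Suc (Suc j)}" "i \<noteq> 1" for i using that by auto
  have WV: "W i = Vs' (i - 1)" if "i \<noteq> 1" for i using that unfolding W_def by simp
  have sp: "\<And>u v. {u,v} \<in> E2 \<Longrightarrow> u \<in> S \<Longrightarrow> v \<notin> T"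
    "\<And>u v z. ({u,v},z) \<in> E3 \<Longrightarrow> u \<in> S \<Longrightarrow> v \<in> T \<Longrightarrow> z \<notin> T \<and> z \<notin> Z1"
    using D(7) unfolding sep_def by blast+
  have g: "\<And>i l u v. i\<in>{1..Suc j} \<Longrightarrow> l\<in>{1..Suc j} \<Longrightarrow> i \<noteq> l \<Longrightarrow> {u,v} \<in> E2 \<Longrightarrow> u \<in> Vs' i \<Longrightarrow> v \<notin> Vs' l"
    "\<And>i l u v z q. i\<in>{1..Suc j} \<Longrightarrow> l\<in>{1..Suc j} \<Longrightarrow> i \<noteq> l \<Longrightarrow> ({u,v},z) \<in> E3 \<Longrightarrow> u \<in> Vs' i \<Longrightarrow> v \<in> Vs' l \<Longrightarrow>
       z \<notin> Z2 \<and> (q\<in>{1..Suc j} \<longrightarrow> q \<noteq> min i l \<longrightarrow> z \<notin> Vs' q)"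
    using R(5) unfolding good_def by blast+
  show ?case
  proof (intro exI conjI)
    show "\<forall>i\<in>{1..Suc (Suc j)}. W i \<subseteq> U \<and> m \<le> card (W i)"
    proof
      fix i assume i: "i \<in> {1..Suc (Suc j)}"
      show "W i \<subseteq> U \<and> m \<le> card (W i)"
      proof (cases "i = 1")
        case True then show ?thesis using W1 D(1) cSZ unfolding W_def by auto
      next
        case False
        have "Vs' (i - 1) \<subseteq> T \<and> m \<le> card (Vs' (i - 1))" using R(1) Wi[OF i False] by blast
        then show ?thesis using D(2) WV[OF False] by auto
      qed
    qed
    show "\<forall>i\<in>{1..Suc (Suc j)}. \<forall>l\<in>{1..Suc (Suc j)}. i \<noteq> l \<longrightarrow> W i \<inter> W l = {}"
    proof (intro ballI impI)
      fix i l assume i: "i \<in> {1..Suc (Suc j)}" and l: "l \<in> {1..Suc (Suc j)}" and il: "i \<noteq> l"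
      show "W i \<inter> W l = {}"
      proof (cases "i = 1")
        case True then show ?thesis using W1 WT[OF l] il D(3) by auto
      next
        case F1: False
        show ?thesis
        proof (cases "l = 1")
          case True then show ?thesis using W1 WT[OF i] F1 D(3) by auto
        next
          case False
          have "i - 1 \<noteq> l - 1" using il F1 False i l by auto
          then show ?thesis using R(2) Wi[OF i F1] Wi[OF l False] WV F1 False by auto
        qed
      qed
    qed
    show "Z' \<subseteq> Z" unfolding Z'_def using D(4) by auto
    show "card (Z - Z') + 2 * m \<le> 2 * 3 ^ Suc j * m" by (rule cZ)
    show "good (Suc (Suc j)) W Z'"
      unfolding good_def
    proof (rule conjI)
     show "\<forall>i\<in>{1..Suc (Suc j)}. \<forall>l\<in>{1..Suc (Suc j)}. i \<noteq> l \<longrightarrow> (\<forall>u v. {u,v} \<in> E2 \<longrightarrow> u \<in> W i \<longrightarrow> v \<notin> W l)"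
     proof (intro ballI impI allI)
      fix i l u v assume i: "i \<in> {1..Suc (Suc j)}" and l: "l \<in> {1..Suc (Suc j)}" and il: "i \<noteq> l"
        and e: "{u, v} \<in> E2" and u: "u \<in> W i"
      show "v \<notin> W l"
      proof (cases "i = 1")
        case True then show ?thesis using sp(1)[OF e] u W1 WT[OF l] il by auto
      next
        case F1: False
        show ?thesis
        proof (cases "l = 1")
          case True
          have e': "{v, u} \<in> E2" using e by (simp add: insert_commute)
          show ?thesis using sp(1)[OF e'] u W1 WT[OF i F1] True by auto
        next
          case False
          have "i - 1 \<noteq> l - 1" using il F1 False i l by auto
          then show ?thesis using g(1)[OF Wi[OF i F1] Wi[OF l False] _ e] u WV F1 False by auto
        qed
      qed
     qed
    next
     show "\<forall>i\<in>{1..Suc (Suc j)}. \<forall>l\<in>{1..Suc (Suc j)}. i \<noteq> l \<longrightarrow> (\<forall>u v z. ({u,v},z) \<in> E3 \<longrightarrow> u \<in> W i \<longrightarrow> v \<in> W l \<longrightarrow> z \<notin> Z' \<and> (\<forall>q\<in>{1..Suc (Suc j)}. q \<noteq> min i l \<longrightarrow> z \<notin> W q))"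
     proof (intro ballI impI allI)
      fix i l u v z assume i: "i \<in> {1..Suc (Suc j)}" and l: "l \<in> {1..Suc (Suc j)}" and il: "i \<noteq> l"
        and e: "({u, v}, z) \<in> E3" and u: "u \<in> W i" and v: "v \<in> W l"
      show "z \<notin> Z' \<and> (\<forall>q\<in>{1..Suc (Suc j)}. q \<noteq> min i l \<longrightarrow> z \<notin> W q)"
      proof (cases "i = 1")
        case True
        have zz: "z \<notin> T \<and> z \<notin> Z1" using sp(2)[OF e] u v W1 WT[OF l] il True by auto
        have mm: "min i l = 1" using True l by auto
        show ?thesis
        proof (intro conjI ballI impI)
          show "z \<notin> Z'" using zz unfolding Z'_def by auto
          fix q assume q: "q \<in> {1..Suc (Suc j)}" and qm: "q \<noteq> min i l"
          show "z \<notin> W q" using WT[OF q] qm mm zz by auto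
        qed
      next
        case F1: False
        show ?thesis
        proof (cases "l = 1")
          case True
          have e': "({v, u}, z) \<in> E3" using e by (simp add: insert_commute)
          have zz: "z \<notin> T \<and> z \<notin> Z1" using sp(2)[OF e'] u v W1 WT[OF i F1] True by auto
          have mm: "min i l = 1" using True i by auto
          show ?thesis
        proof (intro conjI ballI impI)
          show "z \<notin> Z'" using zz unfolding Z'_def by auto
          fix q assume q: "q \<in> {1..Suc (Suc j)}" and qm: "q \<noteq> min i l"
          show "z \<notin> W q" using WT[OF q] qm mm zz by auto
        qed
        next
          case False
          have il': "i - 1 \<noteq> l - 1" using il F1 False i l by auto
          have u': "u \<in> Vs' (i - 1)" and v': "v \<in> Vs' (l - 1)" using u v WV F1 False by auto
          note G = g(2)[OF Wi[OF i F1] Wi[OF l False] il' e u' v']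
          have zZ2: "z \<notin> Z2" using G by blast
          show ?thesis
          proof (intro conjI ballI impI)
            show "z \<notin> Z'" using zZ2 unfolding Z'_def by auto
            fix q assume q: "q \<in> {1..Suc (Suc j)}" and qm: "q \<noteq> min i l"
            show "z \<notin> W q"
            proof (cases "q = 1")
              case True then show ?thesis using W1 zZ2 by auto
            next
              case Fq: False
              have "q - 1 \<noteq> min (i - 1) (l - 1)" using qm Fq F1 False i l q by auto
              then have "z \<notin> Vs' (q - 1)" using G Wi[OF q Fq] by blast
              then show ?thesis using WV[OF Fq] by simp
            qed
          qed
        qed
     qed
      qed
    qed
  qed
qed

end

theorem lemma3p2:
  fixes V :: "'a set" and E2 :: "'a set set" and E3 :: "('a set \<times> 'a) set"
    and k c n :: nat
  assumes "k > 0" "c > 0" "n > 0"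
    and "finite V" and "graph23 V E2 E3"
    and "card V \<ge> 5 ^ (k - 1) * c * n"
    and "\<not> (\<exists>xs. length xs = n \<and> path23 V E2 E3 xs)"
  shows "\<exists>Vs :: nat \<Rightarrow> 'a set.
           (\<forall>i\<in>{1..k}. Vs i \<subseteq> V \<and> card (Vs i) \<ge> c * n) \<and>
           (\<forall>i\<in>{1..k}. \<forall>j\<in>{1..k}. i \<noteq> j \<longrightarrow> Vs i \<inter> Vs j = {}) \<and>
           (\<forall>u v. {u, v} \<in> E2 \<longrightarrow> \<not> transversal2 k Vs u v) \<and>
           (\<forall>u v w. ({u, v}, w) \<in> E3 \<longrightarrow> \<not> transversal3 k Vs u v w) \<and>
           (\<forall>u v w. ({u, v}, w) \<in> E3 \<longrightarrow>
              \<not> ((\<exists>i\<in>{1..<k}. u \<in> Vs i) \<and> v \<in> Vs k \<and> w \<in> Vs k))"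
proof -
  interpret G: G23 V E2 E3 n using assms(4,5,7) by unfold_locales auto
  have nm: "n \<le> c * n" using assms(2) by simp
  have kk: "Suc (k - 1) = k" using assms(1) by simp
  have cV: "5 ^ (k - 1) * (c * n) \<le> card V" using assms(6) by (simp add: mult.assoc)
  obtain Vs Z' where R: "\<forall>i\<in>{1..k}. Vs i \<subseteq> V \<and> c * n \<le> card (Vs i)"
      "\<forall>i\<in>{1..k}. \<forall>l\<in>{1..k}. i \<noteq> l \<longrightarrow> Vs i \<inter> Vs l = {}" "G.good k Vs Z'"
    using G.GL[OF nm order_refl empty_subsetI _ cV] kk by auto
  have g1: "\<And>i l u v. i\<in>{1..k} \<Longrightarrow> l\<in>{1..k} \<Longrightarrow> i \<noteq> l \<Longrightarrow> {u,v} \<in> E2 \<Longrightarrow> u \<in> Vs i \<Longrightarrow> v \<notin> Vs l"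
    using R(3) unfolding G.good_def by blast
  have g2: "\<And>i l u v z q. i\<in>{1..k} \<Longrightarrow> l\<in>{1..k} \<Longrightarrow> i \<noteq> l \<Longrightarrow> ({u,v},z) \<in> E3 \<Longrightarrow> u \<in> Vs i \<Longrightarrow> v \<in> Vs l \<Longrightarrow>
       q\<in>{1..k} \<Longrightarrow> q \<noteq> min i l \<Longrightarrow> z \<notin> Vs q"
    using R(3) unfolding G.good_def by blast
  show ?thesis
  proof (intro exI conjI allI impI)
    show "\<forall>i\<in>{1..k}. Vs i \<subseteq> V \<and> c * n \<le> card (Vs i)" by (rule R(1))
    show "\<forall>i\<in>{1..k}. \<forall>j\<in>{1..k}. i \<noteq> j \<longrightarrow> Vs i \<inter> Vs j = {}" by (rule R(2))
    fix u v assume e: "{u, v} \<in> E2"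
    show "\<not> transversal2 k Vs u v"
      unfolding transversal2_def using g1[OF _ _ _ e] by blast
  next
    fix u v w assume e: "({u, v}, w) \<in> E3"
    show "\<not> transversal3 k Vs u v w"
    proof
      assume "transversal3 k Vs u v w"
      then obtain i j l where "i\<in>{1..k}" "j\<in>{1..k}" "l\<in>{1..k}" "i \<noteq> j" "i \<noteq> l" "j \<noteq> l"
        "u \<in> Vs i" "v \<in> Vs j" "w \<in> Vs l" unfolding transversal3_def by blast
      moreover have "l \<noteq> min i j" using \<open>i \<noteq> l\<close> \<open>j \<noteq> l\<close> by (simp add: min_def)
      ultimately show False using g2[OF _ _ _ e] by blast
    qed
  next
    fix u v w assume e: "({u, v}, w) \<in> E3"
    show "\<not> ((\<exists>i\<in>{1..<k}. u \<in> Vs i) \<and> v \<in> Vs k \<and> w \<in> Vs k)"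
    proof
      assume "(\<exists>i\<in>{1..<k}. u \<in> Vs i) \<and> v \<in> Vs k \<and> w \<in> Vs k"
      then obtain i where i: "i \<in> {1..<k}" "u \<in> Vs i" "v \<in> Vs k" "w \<in> Vs k" by blast
      have "k \<noteq> min i k" using i(1) by simp
      moreover have "i \<in> {1..k}" "k \<in> {1..k}" "i \<noteq> k" using i(1) assms(1) by auto
      ultimately show False using g2[OF _ _ _ e i(2,3)] i(4) by blast
    qed
  qed
qed


end
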